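(* Let $U\subseteq S$ be measurable, $\gamma\in(0,1)$, $r(s,a,s')=\mathbf 1_{\{s\in U\}}$, and $\pi$ a stationary policy. Let $I\subseteq S$ be a measurable set that is absorbing under $\pi$, and assume $\Pr_\pi(\tau_U<\infty\mid S_0=s)=1$ for all $s\in I\setminus U$. Then for all $s\in I\setminus U$, $$\mathbb{E}_\pi[V^\pi(S_1)\mid S_0=s]-V^\pi(s)>0.$$
   Context: $(S,\mathit{Act},P,\mu)$ is an MDP with state/action spaces finite/countable or Borel subsets of Euclidean space. A stationary policy $\pi$ is a stochastic kernel on $\mathit{Act}$ given $S$; $\Pr_\pi(\cdot\mid S_0=s)$, $\mathbb{E}_\pi[\cdot\mid S_0=s]$ refer to the process with $S_0=s$, $A_t\sim\pi(\cdot\mid S_t)$, $S_{t+1}\sim P(\cdot\mid S_t,A_t)$. Value function: $V^\pi(s)=\mathbb{E}_\pi[\sum_{t\ge0}\gamma^t r(S_t,A_t,S_{t+1})\mid S_0=s]$. A measurable set $X$ is absorbing under $\pi$ if $\Pr_\pi(S_1\in X\mid S_0=s)=1$ for all $s\in X$. $\tau_U:=\inf\{t\ge0:S_t\in U\}$, $\inf\emptyset=\infty$. *)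

theory Defs
  imports "HOL-Probability.Probability"
begin

text \<open>The state-action process
  Z_t = (S_t, A_t) started at S_0 = s is built by the Ionescu-Tulcea theorem
  as a measure on paths nat => (S x Act).\<close>

definition sa_dist :: "'s measure \<Rightarrow> 'a measure \<Rightarrow> ('s \<Rightarrow> 'a measure) \<Rightarrow> 's \<Rightarrow> ('s \<times> 'a) measure" where
  "sa_dist Sm Am pol s = distr (pol s) (Sm \<Otimes>\<^sub>M Am) (\<lambda>a. (s, a))"

definition mdp_kernel :: "'s measure \<Rightarrow> 'a measure \<Rightarrow> ('s \<times> 'a \<Rightarrow> 's measure) \<Rightarrow> ('s \<Rightarrow> 'a measure)
    \<Rightarrow> 's \<Rightarrow> nat \<Rightarrow> (nat \<Rightarrow> 's \<times> 'a) \<Rightarrow> ('s \<times> 'a) measure" where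
  "mdp_kernel Sm Am P pol s i \<omega> =
     (if i = 0 then sa_dist Sm Am pol s
      else P (\<omega> (i - 1)) \<bind> (\<lambda>s'. sa_dist Sm Am pol s'))"

definition mdp_path :: "'s measure \<Rightarrow> 'a measure \<Rightarrow> ('s \<times> 'a \<Rightarrow> 's measure) \<Rightarrow> ('s \<Rightarrow> 'a measure)
    \<Rightarrow> 's \<Rightarrow> (nat \<Rightarrow> 's \<times> 'a) measure" where
  "mdp_path Sm Am P pol s =
     projective_family.lim UNIV
       (Ionescu_Tulcea.CI (mdp_kernel Sm Am P pol s) (\<lambda>_. Sm \<Otimes>\<^sub>M Am)) (\<lambda>_. Sm \<Otimes>\<^sub>M Am)"

definition is_mdp :: "'s measure \<Rightarrow> 'a measure \<Rightarrow> ('s \<times> 'a \<Rightarrow> 's measure) \<Rightarrow> ('s \<Rightarrow> 'a measure) \<Rightarrow> bool" where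
  "is_mdp Sm Am P pol \<longleftrightarrow>
     P \<in> measurable (Sm \<Otimes>\<^sub>M Am) (prob_algebra Sm) \<and> pol \<in> measurable Sm (prob_algebra Am)"

definition value_fun :: "'s measure \<Rightarrow> 'a measure \<Rightarrow> ('s \<times> 'a \<Rightarrow> 's measure) \<Rightarrow> ('s \<Rightarrow> 'a measure)
    \<Rightarrow> ('s \<Rightarrow> 'a \<Rightarrow> 's \<Rightarrow> real) \<Rightarrow> real \<Rightarrow> 's \<Rightarrow> real" where
  "value_fun Sm Am P pol r \<gamma> s =
     (\<integral>\<omega>. (\<Sum>t. \<gamma> ^ t * r (fst (\<omega> t)) (snd (\<omega> t)) (fst (\<omega> (Suc t)))) \<partial>mdp_path Sm Am P pol s)"

definition hit_time :: "'s set \<Rightarrow> (nat \<Rightarrow> 's \<times> 'a) \<Rightarrow> enat" where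
  "hit_time U \<omega> = Inf {enat t | t. fst (\<omega> t) \<in> U}"

definition absorbing :: "'s measure \<Rightarrow> 'a measure \<Rightarrow> ('s \<times> 'a \<Rightarrow> 's measure) \<Rightarrow> ('s \<Rightarrow> 'a measure)
    \<Rightarrow> 's set \<Rightarrow> bool" where
  "absorbing Sm Am P pol X \<longleftrightarrow>
     (\<forall>s\<in>X. measure (mdp_path Sm Am P pol s)
                {\<omega> \<in> space (mdp_path Sm Am P pol s). fst (\<omega> 1) \<in> X} = 1)"

end

theory Submission
  imports Defs
begin

lemma geo_summable:
  fixes a :: "nat \<Rightarrow> real" and \<gamma> :: real
  assumes "0 < \<gamma>" "\<gamma> < 1" "\<And>t. 0 \<le> a t \<and> a t \<le> 1"
  shows "summable (\<lambda>t. \<gamma>^t * a t)"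
proof (rule summable_comparison_test'[where g="\<lambda>t. \<gamma>^t" and N=0])
  show "summable (\<lambda>t. \<gamma>^t)" using assms by (intro summable_geometric) auto
  fix n show "norm (\<gamma>^n * a n) \<le> \<gamma>^n" using assms(1) assms(3)[of n]
    by (simp add: abs_mult mult_left_le)
qed

lemma geo_bound:
  fixes a :: "nat \<Rightarrow> real" and \<gamma> :: real
  assumes "0 < \<gamma>" "\<gamma> < 1" "\<And>t. 0 \<le> a t \<and> a t \<le> 1"
  shows "\<bar>\<Sum>t. \<gamma>^t * a t\<bar> \<le> 1 / (1 - \<gamma>)"
proof -
  have s: "summable (\<lambda>t. \<gamma>^t * a t)" by (rule geo_summable[OF assms])
  have g: "summable (\<lambda>t. \<gamma>^t)" using assms by (intro summable_geometric) auto
  have "0 \<le> (\<Sum>t. \<gamma>^t * a t)" using assms by (intro suminf_nonneg[OF s]) auto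
  moreover have "(\<Sum>t. \<gamma>^t * a t) \<le> (\<Sum>t. \<gamma>^t)"
    using assms by (intro suminf_le[OF _ s g]) (simp add: mult_left_le)
  moreover have "(\<Sum>t. \<gamma>^t) = 1 / (1 - \<gamma>)" using assms by (intro suminf_geometric) auto
  ultimately show ?thesis by simp
qed

lemma geo_int:
  fixes M and f :: "nat \<Rightarrow> 'x \<Rightarrow> real" and \<gamma> :: real
  assumes M: "prob_space M" and g: "0 < \<gamma>" "\<gamma> < 1"
    and fm: "\<And>t. f t \<in> borel_measurable M"
    and fb: "\<And>t x. x \<in> space M \<Longrightarrow> 0 \<le> f t x \<and> f t x \<le> 1"
  shows "(\<integral>x. (\<Sum>t. \<gamma>^t * f t x) \<partial>M) = (\<Sum>t. \<gamma>^t * (\<integral>x. f t x \<partial>M))"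
proof -
  interpret prob_space M by (rule M)
  have nb: "norm (\<gamma>^t * f t x) \<le> \<gamma>^t" if "x \<in> space M" for t x
    using fb[OF that, of t] g by (simp add: abs_mult mult_left_le)
  have int: "integrable M (\<lambda>x. \<gamma>^t * f t x)" for t
  proof (intro integrable_const_bound[where B=1] AE_I2)
    fix x assume x: "x \<in> space M"
    have "\<gamma>^t \<le> 1" using g by (intro power_le_one) auto
    then show "norm (\<gamma>^t * f t x) \<le> 1" using nb[OF x, of t] by linarith
  next
    show "(\<lambda>x. \<gamma>^t * f t x) \<in> borel_measurable M" using fm[of t] by measurable
  qed
  have summ: "AE x in M. summable (\<lambda>t. norm (\<gamma>^t * f t x))"
  proof (rule AE_I2)
    fix x assume x: "x \<in> space M"
    show "summable (\<lambda>t. norm (\<gamma>^t * f t x))"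
      by (rule summable_comparison_test'[where g="\<lambda>t. \<gamma>^t" and N=0])
         (use g nb[OF x] in \<open>auto intro: summable_geometric\<close>)
  qed
  have summ2: "summable (\<lambda>t. \<integral>x. norm (\<gamma>^t * f t x) \<partial>M)"
  proof (rule summable_comparison_test'[where g="\<lambda>t. \<gamma>^t" and N=0])
    show "summable (\<lambda>t. \<gamma>^t)" using g by (intro summable_geometric) auto
    fix n
    have "(\<integral>x. norm (\<gamma>^n * f n x) \<partial>M) \<le> \<gamma>^n"
      by (rule integral_le_const) (use int nb in \<open>auto intro: AE_I2\<close>)
    moreover have "0 \<le> (\<integral>x. norm (\<gamma>^n * f n x) \<partial>M)" by simp
    ultimately show "norm (\<integral>x. norm (\<gamma>^n * f n x) \<partial>M) \<le> \<gamma>^n" by simp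
  qed
  have "(\<integral>x. (\<Sum>t. \<gamma>^t * f t x) \<partial>M) = (\<Sum>t. (\<integral>x. \<gamma>^t * f t x \<partial>M))"
    by (rule integral_suminf[OF int summ summ2])
  then show ?thesis by simp
qed


locale mdp_ctx =
  fixes Sm :: "'s measure" and Am :: "'a measure"
    and P :: "'s \<times> 'a \<Rightarrow> 's measure" and pol :: "'s \<Rightarrow> 'a measure"
  assumes mdp: "is_mdp Sm Am P pol"
begin

abbreviation "SA \<equiv> Sm \<Otimes>\<^sub>M Am"
definition "sd = sa_dist Sm Am pol"
definition "Q z = P z \<bind> sd"
primrec G where "G 0 s = sd s" | "G (Suc t) s = G t s \<bind> Q"
definition "R s = sd s \<bind> P"

lemma P_meas: "P \<in> SA \<rightarrow>\<^sub>M prob_algebra Sm" and pol_meas: "pol \<in> Sm \<rightarrow>\<^sub>M prob_algebra Am"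
  using mdp by (auto simp: is_mdp_def)

lemma sd_meas: "sd \<in> Sm \<rightarrow>\<^sub>M prob_algebra SA"
proof -
  have "(\<lambda>s. distr (pol s) SA (\<lambda>a. (s, a))) \<in> Sm \<rightarrow>\<^sub>M prob_algebra SA"
    by (rule measurable_distr_prob_space2[OF pol_meas]) simp
  then show ?thesis by (simp add: sd_def sa_dist_def[abs_def])
qed

lemma Q_meas: "Q \<in> SA \<rightarrow>\<^sub>M prob_algebra SA"
  using measurable_bind_prob_space[OF P_meas sd_meas] by (simp add: Q_def[abs_def])

lemma R_meas: "R \<in> Sm \<rightarrow>\<^sub>M prob_algebra Sm"
  using measurable_bind_prob_space[OF sd_meas P_meas] by (simp add: R_def[abs_def])

lemma G_meas: "G t \<in> Sm \<rightarrow>\<^sub>M prob_algebra SA"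
proof (induction t)
  case 0 then show ?case using sd_meas by (simp add: G.simps(1)[abs_def])
next
  case (Suc t)
  have "(\<lambda>s. G t s \<bind> Q) \<in> Sm \<rightarrow>\<^sub>M prob_algebra SA"
    by (rule measurable_bind_prob_space[OF Suc Q_meas])
  then show ?case by (simp add: G.simps(2)[abs_def])
qed

lemma pa_space: "f \<in> M \<rightarrow>\<^sub>M prob_algebra N \<Longrightarrow> x \<in> space M \<Longrightarrow> prob_space (f x) \<and> sets (f x) = sets N"
  using measurable_space[of f M "prob_algebra N" x] by (auto simp: space_prob_algebra)

lemma pa_sub: "f \<in> M \<rightarrow>\<^sub>M prob_algebra N \<Longrightarrow> x \<in> space M \<Longrightarrow> f x \<in> space (subprob_algebra N)"
  using pa_space[of f M N x] by (auto simp: space_subprob_algebra prob_space_imp_subprob_space)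

lemma K_eq: "mdp_kernel Sm Am P pol s i = (\<lambda>\<omega>. if i = 0 then sd s else Q (\<omega> (i - 1)))"
  by (auto simp: mdp_kernel_def sd_def Q_def fun_eq_iff)

lemma IT_meas: assumes s: "s \<in> space Sm"
  shows "mdp_kernel Sm Am P pol s i \<in> Pi\<^sub>M {0..<i} (\<lambda>_. SA) \<rightarrow>\<^sub>M subprob_algebra SA"
proof (cases "i = 0")
  case True
  then show ?thesis unfolding K_eq using pa_sub[OF sd_meas s] by simp
next
  case False
  have "(\<lambda>\<omega>. Q (\<omega> (i - 1))) \<in> Pi\<^sub>M {0..<i} (\<lambda>_. SA) \<rightarrow>\<^sub>M subprob_algebra SA"
  proof (rule measurable_compose[OF _ measurable_prob_algebraD[OF Q_meas]])
    show "(\<lambda>\<omega>. \<omega> (i - 1)) \<in> Pi\<^sub>M {0..<i} (\<lambda>_. SA) \<rightarrow>\<^sub>M SA"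
      using measurable_component_singleton[of "i - 1" "{0..<i}" "\<lambda>_. SA"] False by simp
  qed
  then show ?thesis unfolding K_eq using False by simp
qed

lemma IT_prob: assumes s: "s \<in> space Sm" and x: "x \<in> space (Pi\<^sub>M {0..<i} (\<lambda>_. SA))"
  shows "prob_space (mdp_kernel Sm Am P pol s i x)"
proof (cases "i = 0")
  case True
  then show ?thesis unfolding K_eq using pa_space[OF sd_meas s] by simp
next
  case False
  then have "x (i - 1) \<in> space SA" using x by (auto simp: space_PiM)
  then show ?thesis unfolding K_eq using False pa_space[OF Q_meas] by simp
qed

lemma IT: assumes s: "s \<in> space Sm" shows "Ionescu_Tulcea (mdp_kernel Sm Am P pol s) (\<lambda>_. SA)"
  by (rule Ionescu_Tulcea.intro) (use IT_meas[OF s] IT_prob[OF s] in auto)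

lemma G0: "G 0 = sd" by (rule ext) simp
lemma GSuc: "G (Suc t) = (\<lambda>y. G t y \<bind> Q)" by (rule ext) simp

lemma R_sets: "y \<in> space Sm \<Longrightarrow> sets (R y) = sets Sm"
  using pa_space[OF R_meas] by blast

lemma F: assumes y: "y \<in> space Sm" shows "G (Suc t) y = R y \<bind> G t"
proof (induction t)
  case 0
  have m1: "P \<in> sd y \<rightarrow>\<^sub>M subprob_algebra Sm"
    unfolding measurable_cong_sets[OF conjunct2[OF pa_space[OF sd_meas y]] refl]
    by (rule measurable_prob_algebraD[OF P_meas])
  have "R y \<bind> G 0 = (sd y \<bind> P) \<bind> sd" by (simp add: G0 R_def)
  also have "\<dots> = sd y \<bind> (\<lambda>z. P z \<bind> sd)"
    by (rule bind_assoc[OF m1 measurable_prob_algebraD[OF sd_meas]])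
  also have "\<dots> = G (Suc 0) y" by (simp add: Q_def[abs_def])
  finally show ?case ..
next
  case (Suc t)
  have m1: "G t \<in> R y \<rightarrow>\<^sub>M subprob_algebra SA"
    unfolding measurable_cong_sets[OF R_sets[OF y] refl]
    by (rule measurable_prob_algebraD[OF G_meas])
  have "G (Suc (Suc t)) y = (R y \<bind> G t) \<bind> Q" using Suc by simp
  also have "\<dots> = R y \<bind> (\<lambda>y'. G t y' \<bind> Q)"
    by (rule bind_assoc[OF m1 measurable_prob_algebraD[OF Q_meas]])
  also have "\<dots> = R y \<bind> G (Suc t)" by (simp add: GSuc)
  finally show ?case .
qed

definition pp :: "'s set \<Rightarrow> nat \<Rightarrow> 's \<Rightarrow> real" where
  "pp U t y = (\<integral>z. indicator U (fst z) \<partial>G t y)"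

lemma ind_meas: assumes [measurable]: "U \<in> sets Sm"
  shows "(\<lambda>z. indicator U (fst z) :: real) \<in> borel_measurable SA"
  by measurable

lemma pp_meas: assumes U: "U \<in> sets Sm" shows "pp U t \<in> borel_measurable Sm"
  unfolding pp_def[abs_def]
  by (rule measurable_compose[OF measurable_prob_algebraD[OF G_meas] integral_measurable_subprob_algebra[OF ind_meas[OF U]]])

lemma pp_bnd: assumes U: "U \<in> sets Sm" and y: "y \<in> space Sm"
  shows "0 \<le> pp U t y \<and> pp U t y \<le> 1"
proof -
  interpret prob_space "G t y" using pa_space[OF G_meas y] by blast
  have m: "(\<lambda>z. indicator U (fst z) :: real) \<in> borel_measurable (G t y)"
    unfolding measurable_cong_sets[OF conjunct2[OF pa_space[OF G_meas y]] refl]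
    by (rule ind_meas[OF U])
  have i: "integrable (G t y) (\<lambda>z. indicator U (fst z) :: real)"
    by (rule integrable_const_bound[where B=1]) (use m in auto)
  show ?thesis unfolding pp_def
    by (auto intro!: integral_le_const i AE_I2)
qed

lemma sd_int: assumes y: "y \<in> space Sm" and f: "f \<in> borel_measurable Sm"
  shows "(\<integral>z. f (fst z) \<partial>sd y) = (f y :: real)"
proof -
  interpret prob_space "pol y" using pa_space[OF pol_meas y] by blast
  have m: "(\<lambda>a. (y, a)) \<in> pol y \<rightarrow>\<^sub>M SA"
    unfolding measurable_cong_sets[OF conjunct2[OF pa_space[OF pol_meas y]] refl]
    by (intro measurable_Pair measurable_const[OF y]) simp
  have "(\<integral>z. f (fst z) \<partial>sd y) = (\<integral>a. f (fst (y, a)) \<partial>pol y)"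
    unfolding sd_def sa_dist_def by (rule integral_distr[OF m]) (use f in measurable)
  also have "\<dots> = f y" by (simp add: prob_space)
  finally show ?thesis .
qed

lemma pp0: assumes U: "U \<in> sets Sm" and y: "y \<in> space Sm" shows "pp U 0 y = indicator U y"
  unfolding pp_def G.simps by (rule sd_int[OF y]) (use U in measurable)

lemma fin_R: "y \<in> space Sm \<Longrightarrow> finite_measure (R y)"
  using pa_space[OF R_meas, of y] by (simp add: prob_space_def)

lemma pp_Suc: assumes U: "U \<in> sets Sm" and y: "y \<in> space Sm"
  shows "pp U (Suc t) y = (\<integral>y'. pp U t y' \<partial>R y)"
proof -
  have m1: "G t \<in> R y \<rightarrow>\<^sub>M subprob_algebra SA"
    unfolding measurable_cong_sets[OF R_sets[OF y] refl]
    by (rule measurable_prob_algebraD[OF G_meas])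
  have "pp U (Suc t) y = (\<integral>z. indicator U (fst z) \<partial>(R y \<bind> G t))"
    unfolding pp_def F[OF y] ..
  also have "\<dots> = (\<integral>y'. (\<integral>z. indicator U (fst z) \<partial>G t y') \<partial>R y)"
  proof (rule integral_bind[OF ind_meas[OF U] _ m1 fin_R[OF y]])
    show "\<bar>indicator U (fst x) :: real\<bar> \<le> 1" for x by simp
    show "AE x in R y. emeasure (G t x) (space (G t x)) \<le> ennreal 1"
    proof (rule AE_I2)
      fix x assume "x \<in> space (R y)"
      then have "x \<in> space Sm" using R_sets[OF y] sets_eq_imp_space_eq by blast
      then have "prob_space (G t x)" using pa_space[OF G_meas] by blast
      then show "emeasure (G t x) (space (G t x)) \<le> ennreal 1"
        by (simp add: prob_space.emeasure_space_1)
    qed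
  qed
  also have "\<dots> = (\<integral>y'. pp U t y' \<partial>R y)" unfolding pp_def ..
  finally show ?thesis .
qed

lemma R_sd: fixes f :: "'s \<Rightarrow> real" assumes y: "y \<in> space Sm" and f: "f \<in> borel_measurable Sm"
  and B: "\<And>x. x \<in> space Sm \<Longrightarrow> \<bar>f x\<bar> \<le> B"
  shows "(\<integral>z. f (fst z) \<partial>G 1 y) = (\<integral>y'. f y' \<partial>R y)"
proof -
  have m1: "sd \<in> R y \<rightarrow>\<^sub>M subprob_algebra SA"
    unfolding measurable_cong_sets[OF R_sets[OF y] refl]
    by (rule measurable_prob_algebraD[OF sd_meas])
  have fm: "(\<lambda>z. f (fst z)) \<in> borel_measurable SA" using f by measurable
  have "(\<integral>z. f (fst z) \<partial>G 1 y) = (\<integral>z. f (fst z) \<partial>(R y \<bind> sd))"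
    using F[OF y, of 0] by (simp add: G0)
  also have "\<dots> = (\<integral>y'. (\<integral>z. f (fst z) \<partial>sd y') \<partial>R y)"
  proof (rule integral_bind[where K=SA and B=B and B'=1])
    show "(\<lambda>z. f (fst z)) \<in> borel_measurable SA" by (rule fm)
    show "sd \<in> R y \<rightarrow>\<^sub>M subprob_algebra SA" by (rule m1)
    show "finite_measure (R y)" by (rule fin_R[OF y])
    show "\<bar>f (fst x)\<bar> \<le> B" if "x \<in> space SA" for x using B that by (auto simp: space_pair_measure)
    show "AE x in R y. emeasure (sd x) (space (sd x)) \<le> ennreal 1"
    proof (rule AE_I2)
      fix x assume "x \<in> space (R y)"
      then have "x \<in> space Sm" using R_sets[OF y] sets_eq_imp_space_eq by blast
      then have "prob_space (sd x)" using pa_space[OF sd_meas] by blast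
      then show "emeasure (sd x) (space (sd x)) \<le> ennreal 1"
        by (simp add: prob_space.emeasure_space_1)
    qed
  qed
  also have "\<dots> = (\<integral>y'. f y' \<partial>R y)"
  proof (rule Bochner_Integration.integral_cong[OF refl])
    fix x assume "x \<in> space (R y)"
    then have "x \<in> space Sm" using R_sets[OF y] sets_eq_imp_space_eq by blast
    then show "(\<integral>z. f (fst z) \<partial>sd x) = f x" by (rule sd_int[OF _ f])
  qed
  finally show ?thesis .
qed

end

locale mdp_s = mdp_ctx Sm Am P pol
  for Sm :: "'s measure" and Am :: "'a measure"
    and P :: "'s \<times> 'a \<Rightarrow> 's measure" and pol :: "'s \<Rightarrow> 'a measure" +
  fixes s :: 's
  assumes s: "s \<in> space Sm"
begin

sublocale T: Ionescu_Tulcea "mdp_kernel Sm Am P pol s" "\<lambda>_. SA"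
  by (rule IT[OF s])

lemma eP_marg: assumes w: "\<omega> \<in> space (Pi\<^sub>M {0..<n} (\<lambda>_. SA))"
  shows "distr (T.eP n \<omega>) SA (\<lambda>x. x n) = mdp_kernel Sm Am P pol s n \<omega>"
proof -
  have m1: "(\<lambda>x. x n) \<in> Pi\<^sub>M {0..<Suc n} (\<lambda>_. SA) \<rightarrow>\<^sub>M SA"
    using measurable_component_singleton[of n "{0..<Suc n}" "\<lambda>_. SA"] by simp
  have m2: "fun_upd \<omega> n \<in> mdp_kernel Sm Am P pol s n \<omega> \<rightarrow>\<^sub>M Pi\<^sub>M {0..<Suc n} (\<lambda>_. SA)"
    unfolding measurable_cong_sets[OF T.sets_P[OF w] refl]
    by (rule measurable_fun_upd[where J="{0..<n}"]) (use w in auto)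
  have "distr (T.eP n \<omega>) SA (\<lambda>x. x n) = distr (mdp_kernel Sm Am P pol s n \<omega>) SA (\<lambda>x. x)"
    unfolding T.eP_def by (subst distr_distr[OF m1 m2]) (simp add: comp_def)
  also have "\<dots> = mdp_kernel Sm Am P pol s n \<omega>"
    by (rule distr_id2) (simp add: T.sets_P[OF w])
  finally show ?thesis .
qed

lemma C_marg: "distr (T.C 0 (Suc t) (\<lambda>_. undefined)) SA (\<lambda>x. x t) = G t s"
proof (induction t)
  case 0
  have u: "(\<lambda>_. undefined) \<in> space (Pi\<^sub>M {0..<0::nat} (\<lambda>_. SA))" by (auto simp: space_PiM PiE_def extensional_def Pi_def)
  have "T.C 0 (Suc 0) (\<lambda>_. undefined) = T.eP 0 (\<lambda>_. undefined)"
    using bind_return[OF T.measurable_eP u] by simp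
  moreover have "mdp_kernel Sm Am P pol s 0 (\<lambda>_. undefined) = sd s" by (simp add: K_eq)
  ultimately show ?case using eP_marg[OF u] by simp
next
  case (Suc t)
  have u: "(\<lambda>_. undefined) \<in> space (Pi\<^sub>M {0..<0::nat} (\<lambda>_. SA))" by (auto simp: space_PiM PiE_def extensional_def Pi_def)
  let ?C = "T.C 0 (Suc t) (\<lambda>_. undefined)"
  have sC: "sets ?C = sets (Pi\<^sub>M {0..<Suc t} (\<lambda>_. SA))" using T.sets_C[OF u, of "Suc t"] by (simp only: add_0)
  have spC: "space ?C = space (Pi\<^sub>M {0..<Suc t} (\<lambda>_. SA))" using T.space_C[OF u, of "Suc t"] by (simp only: add_0)
  have ne: "space ?C \<noteq> {}" using T.prob_space_C[OF u] prob_space.not_empty by blast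
  have m1: "(\<lambda>x. x (Suc t)) \<in> Pi\<^sub>M {0..<Suc (Suc t)} (\<lambda>_. SA) \<rightarrow>\<^sub>M SA"
    using measurable_component_singleton[of "Suc t" "{0..<Suc (Suc t)}" "\<lambda>_. SA"] by simp
  have m1': "(\<lambda>x. x t) \<in> ?C \<rightarrow>\<^sub>M SA"
    unfolding measurable_cong_sets[OF sC refl]
    using measurable_component_singleton[of "t" "{0..<Suc t}" "\<lambda>_. SA"] by simp
  have meP: "T.eP (Suc t) \<in> ?C \<rightarrow>\<^sub>M subprob_algebra (Pi\<^sub>M {0..<Suc (Suc t)} (\<lambda>_. SA))"
    unfolding measurable_cong_sets[OF sC refl] using T.measurable_eP[of "Suc t"] by simp
  have "distr (T.C 0 (Suc (Suc t)) (\<lambda>_. undefined)) SA (\<lambda>x. x (Suc t))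
      = distr (?C \<bind> T.eP (Suc t)) SA (\<lambda>x. x (Suc t))" by simp
  also have "\<dots> = ?C \<bind> (\<lambda>\<omega>. distr (T.eP (Suc t) \<omega>) SA (\<lambda>x. x (Suc t)))"
    by (rule distr_bind[OF meP ne m1])
  also have "\<dots> = ?C \<bind> (\<lambda>\<omega>. Q (\<omega> t))"
  proof (rule bind_cong[OF refl])
    fix \<omega> assume "\<omega> \<in> space ?C"
    then have "\<omega> \<in> space (Pi\<^sub>M {0..<Suc t} (\<lambda>_. SA))" using spC by blast
    from eP_marg[OF this] show "distr (T.eP (Suc t) \<omega>) SA (\<lambda>x. x (Suc t)) = Q (\<omega> t)"
      by (simp add: K_eq)
  qed
  also have "\<dots> = distr ?C SA (\<lambda>x. x t) \<bind> Q"
    by (rule bind_distr[OF m1' measurable_prob_algebraD[OF Q_meas] ne, symmetric])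
  also have "\<dots> = G (Suc t) s" using Suc by simp
  finally show ?case .
qed

abbreviation "mu \<equiv> mdp_path Sm Am P pol s"

lemma mu_eq: "mu = T.PF.lim" by (simp add: mdp_path_def)

lemma up_to_eq: "T.up_to {0..<n} = n"
  unfolding T.up_to_def proof (rule Least_equality)
  show "\<forall>i\<ge>n. i \<notin> {0..<n}" by auto
  fix y assume "\<forall>i\<ge>y. i \<notin> {0..<n}"
  then have "y \<notin> {0..<n}" by simp
  then show "n \<le> y" by simp
qed

lemma mu_sets: "sets mu = sets (Pi\<^sub>M UNIV (\<lambda>_. SA))" and mu_space: "space mu = space (Pi\<^sub>M UNIV (\<lambda>_. SA))"
  by (simp_all add: mu_eq)

lemma comp_meas: "(\<lambda>\<omega>. \<omega> t) \<in> mu \<rightarrow>\<^sub>M SA"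
  unfolding measurable_cong_sets[OF mu_sets refl]
  using measurable_component_singleton[of t UNIV "\<lambda>_. SA"] by simp

lemma path_marg: "distr mu SA (\<lambda>\<omega>. \<omega> t) = G t s"
proof -
  have u: "(\<lambda>_. undefined) \<in> space (Pi\<^sub>M {0..<0::nat} (\<lambda>_. SA))" by (auto simp: space_PiM PiE_def extensional_def Pi_def)
  let ?J = "{0..<Suc t}"
  let ?C = "T.C 0 (Suc t) (\<lambda>_. undefined)"
  have sC: "sets ?C = sets (Pi\<^sub>M {0..<Suc t} (\<lambda>_. SA))" using T.sets_C[OF u, of "Suc t"] by (simp only: add_0)
  have spC: "space ?C = space (Pi\<^sub>M {0..<Suc t} (\<lambda>_. SA))" using T.space_C[OF u, of "Suc t"] by (simp only: add_0)
  have m1: "(\<lambda>x. x t) \<in> Pi\<^sub>M ?J (\<lambda>_. SA) \<rightarrow>\<^sub>M SA"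
    using measurable_component_singleton[of t ?J "\<lambda>_. SA"] by simp
  have m2: "(\<lambda>x. restrict x ?J) \<in> mu \<rightarrow>\<^sub>M Pi\<^sub>M ?J (\<lambda>_. SA)"
    unfolding measurable_cong_sets[OF mu_sets refl] by (rule measurable_restrict_subset) simp
  have m3: "(\<lambda>x. restrict x ?J) \<in> ?C \<rightarrow>\<^sub>M Pi\<^sub>M ?J (\<lambda>_. SA)"
    unfolding measurable_cong_sets[OF sC refl] by (rule measurable_restrict_subset) simp
  have "distr mu SA (\<lambda>\<omega>. \<omega> t) = distr mu SA ((\<lambda>x. x t) \<circ> (\<lambda>x. restrict x ?J))"
    by (rule distr_cong) auto
  also have "\<dots> = distr (distr mu (Pi\<^sub>M ?J (\<lambda>_. SA)) (\<lambda>x. restrict x ?J)) SA (\<lambda>x. x t)"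
    by (rule distr_distr[OF m1 m2, symmetric])
  also have "distr mu (Pi\<^sub>M ?J (\<lambda>_. SA)) (\<lambda>x. restrict x ?J) = T.CI ?J"
    unfolding mu_eq by (rule T.distr_lim) simp
  also have "T.CI ?J = distr ?C (Pi\<^sub>M ?J (\<lambda>_. SA)) (\<lambda>x. restrict x ?J)"
    unfolding T.CI_def up_to_eq ..
  also have "distr \<dots> SA (\<lambda>x. x t) = distr ?C SA ((\<lambda>x. x t) \<circ> (\<lambda>x. restrict x ?J))"
    by (rule distr_distr[OF m1 m3])
  also have "\<dots> = distr ?C SA (\<lambda>x. x t)"
    by (rule distr_cong) auto
  also have "\<dots> = G t s" by (rule C_marg)
  finally show ?thesis .
qed

lemma mu_prob: "prob_space mu"
proof
  have "emeasure mu (space mu) = emeasure (distr mu SA (\<lambda>\<omega>. \<omega> 0)) (space SA)"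
    by (subst emeasure_distr[OF comp_meas]) (auto intro!: arg_cong[where f="emeasure mu"] measurable_space[OF comp_meas])
  also have "\<dots> = 1" unfolding path_marg using pa_space[OF G_meas s, of 0]
    by (metis prob_space.emeasure_space_1 sets_eq_imp_space_eq)
  finally show "emeasure mu (space mu) = 1" .
qed

lemma ind_t_meas: assumes U: "U \<in> sets Sm"
  shows "(\<lambda>\<omega>. indicator U (fst (\<omega> t)) :: real) \<in> borel_measurable mu"
  using measurable_compose[OF comp_meas ind_meas[OF U]] by simp

lemma pp_mu: assumes U: "U \<in> sets Sm"
  shows "pp U t s = (\<integral>\<omega>. indicator U (fst (\<omega> t)) \<partial>mu)"
  unfolding pp_def path_marg[symmetric] by (rule integral_distr[OF comp_meas ind_meas[OF U]])

lemma V_eq: assumes U: "U \<in> sets Sm" and g: "0 < \<gamma>" "\<gamma> < 1"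
  shows "value_fun Sm Am P pol (\<lambda>s a s'. indicator U s) \<gamma> s = (\<Sum>t. \<gamma>^t * pp U t s)"
proof -
  have "value_fun Sm Am P pol (\<lambda>s a s'. indicator U s) \<gamma> s
      = (\<integral>\<omega>. (\<Sum>t. \<gamma>^t * indicator U (fst (\<omega> t))) \<partial>mu)" by (simp add: value_fun_def)
  also have "\<dots> = (\<Sum>t. \<gamma>^t * (\<integral>\<omega>. indicator U (fst (\<omega> t)) \<partial>mu))"
    by (rule geo_int[OF mu_prob g ind_t_meas[OF U]]) (auto simp: indicator_def)
  also have "\<dots> = (\<Sum>t. \<gamma>^t * pp U t s)" by (simp add: pp_mu[OF U])
  finally show ?thesis .
qed

lemma hit_pos: assumes U: "U \<in> sets Sm"
  and h: "measure mu {\<omega> \<in> space mu. hit_time U \<omega> < \<infinity>} = 1"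
  shows "\<exists>t. pp U t s > 0"
proof (rule ccontr)
  assume nt: "\<not> (\<exists>t. pp U t s > 0)"
  have z: "pp U t s = 0" for t
  proof -
    have "\<not> 0 < pp U t s" using nt by blast
    then show ?thesis using pp_bnd[OF U s, of t] by linarith
  qed
  interpret prob_space mu by (rule mu_prob)
  define E where "E t = {\<omega> \<in> space mu. fst (\<omega> t) \<in> U}" for t
  have Es: "E t \<in> sets mu" for t
  proof -
    have "E t = (\<lambda>\<omega>. \<omega> t) -` (U \<times> space Am) \<inter> space mu"
      using measurable_space[OF comp_meas] by (force simp: E_def space_pair_measure mem_Times_iff)
    also have "\<dots> \<in> sets mu"
      by (rule measurable_sets[OF comp_meas]) (use U in auto)
    finally show ?thesis .
  qed
  have "measure mu (E t) = 0" for t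
  proof -
    have "pp U t s = (\<integral>\<omega>. indicator (E t) \<omega> \<partial>mu)"
      unfolding pp_mu[OF U]
      by (rule Bochner_Integration.integral_cong[OF refl]) (auto simp: E_def indicator_def)
    also have "\<dots> = measure mu (E t)" using Es[of t] sets.sets_into_space by (simp add: Int_absorb2)
    finally show ?thesis using z by simp
  qed
  then have "emeasure mu (E t) = 0" for t by (simp add: emeasure_eq_measure)
  then have u0: "emeasure mu (\<Union>t. E t) = 0" by (intro emeasure_UN_eq_0) (use Es in auto)
  have sub: "{\<omega> \<in> space mu. hit_time U \<omega> < \<infinity>} \<subseteq> (\<Union>t. E t)"
  proof
    fix \<omega> assume w: "\<omega> \<in> {\<omega> \<in> space mu. hit_time U \<omega> < \<infinity>}"
    have "\<exists>t. fst (\<omega> t) \<in> U"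
    proof (rule ccontr)
      assume "\<not> ?thesis"
      then have "{enat t |t. fst (\<omega> t) \<in> U} = {}" by auto
      then have "hit_time U \<omega> = \<infinity>" by (simp add: hit_time_def top_enat_def)
      then show False using w by simp
    qed
    then show "\<omega> \<in> (\<Union>t. E t)" using w by (auto simp: E_def)
  qed
  have "emeasure mu {\<omega> \<in> space mu. hit_time U \<omega> < \<infinity>} = 0"
  proof -
    have "(\<Union>t. E t) \<in> sets mu" using Es by blast
    then have "emeasure mu {\<omega> \<in> space mu. hit_time U \<omega> < \<infinity>} \<le> emeasure mu (\<Union>t. E t)"
      by (rule emeasure_mono[OF sub])
    then show ?thesis using u0 by simp
  qed
  then have "measure mu {\<omega> \<in> space mu. hit_time U \<omega> < \<infinity>} = 0" by (simp add: measure_def)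
  then show False using h by simp
qed

end

context mdp_ctx
begin

lemma mdp_s_at: "y \<in> space Sm \<Longrightarrow> mdp_s Sm Am P pol y"
  by (intro mdp_s.intro mdp_s_axioms.intro) (unfold_locales, rule mdp)

lemma V_eq': "y \<in> space Sm \<Longrightarrow> U \<in> sets Sm \<Longrightarrow> 0 < \<gamma> \<Longrightarrow> \<gamma> < 1 \<Longrightarrow>
  value_fun Sm Am P pol (\<lambda>s a s'. indicator U s) \<gamma> y = (\<Sum>t. \<gamma>^t * pp U t y)"
  using mdp_s.V_eq[OF mdp_s_at] by blast

end

theorem lemma3:
  fixes Sm :: "'s measure" and Am :: "'a measure"
    and P :: "'s \<times> 'a \<Rightarrow> 's measure" and pol :: "'s \<Rightarrow> 'a measure"
    and U I :: "'s set" and \<gamma> :: real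
  assumes mdp: "is_mdp Sm Am P pol"
    and U: "U \<in> sets Sm"
    and \<gamma>: "0 < \<gamma>" "\<gamma> < 1"
    and I: "I \<in> sets Sm"
    and absorb: "absorbing Sm Am P pol I"
    and reach: "\<forall>s \<in> I - U. measure (mdp_path Sm Am P pol s)
                   {\<omega> \<in> space (mdp_path Sm Am P pol s). hit_time U \<omega> < \<infinity>} = 1"
  shows "\<forall>s \<in> I - U.
           (\<integral>\<omega>. value_fun Sm Am P pol (\<lambda>s a s'. indicator U s) \<gamma> (fst (\<omega> 1)) \<partial>mdp_path Sm Am P pol s)
             - value_fun Sm Am P pol (\<lambda>s a s'. indicator U s) \<gamma> s > 0"
proof
  fix s assume sIU: "s \<in> I - U"
  interpret C: mdp_ctx Sm Am P pol by unfold_locales (rule mdp)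
  have s: "s \<in> space Sm" using I sets.sets_into_space sIU by blast
  interpret S: mdp_s Sm Am P pol s by (rule C.mdp_s_at[OF s])
  let ?V = "value_fun Sm Am P pol (\<lambda>s a s'. indicator U s) \<gamma>"
  let ?mu = "mdp_path Sm Am P pol s"
  define Vf where "Vf y = (\<Sum>t. \<gamma>^t * C.pp U t y)" for y
  have Veq: "y \<in> space Sm \<Longrightarrow> ?V y = Vf y" for y unfolding Vf_def by (rule C.V_eq'[OF _ U \<gamma>])
  have Vm: "Vf \<in> borel_measurable Sm"
    unfolding Vf_def[abs_def] using C.pp_meas[OF U] by measurable
  have Vb: "\<bar>Vf y\<bar> \<le> 1 / (1 - \<gamma>)" if "y \<in> space Sm" for y
    unfolding Vf_def by (rule geo_bound[OF \<gamma>]) (rule C.pp_bnd[OF U that])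
  have pp0: "C.pp U 0 s = 0" using C.pp0[OF U s] sIU by simp
  have Rp: "prob_space (C.R s)" using C.pa_space[OF C.R_meas s] by blast
  have Rsets: "sets (C.R s) = sets Sm" by (rule C.R_sets[OF s])
  have Rspace: "space (C.R s) = space Sm" using Rsets sets_eq_imp_space_eq by blast
  have "(\<integral>\<omega>. ?V (fst (\<omega> 1)) \<partial>?mu) = (\<integral>\<omega>. Vf (fst (\<omega> 1)) \<partial>?mu)"
  proof (rule Bochner_Integration.integral_cong[OF refl])
    fix \<omega> assume "\<omega> \<in> space ?mu"
    then have "\<omega> 1 \<in> space (Sm \<Otimes>\<^sub>M Am)" using measurable_space[OF S.comp_meas] by blast
    then show "?V (fst (\<omega> 1)) = Vf (fst (\<omega> 1))" by (intro Veq) (auto simp: space_pair_measure)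
  qed
  also have "\<dots> = (\<integral>z. Vf (fst z) \<partial>C.G 1 s)"
    unfolding S.path_marg[symmetric] by (rule integral_distr[OF S.comp_meas, symmetric]) (use Vm in measurable)
  also have "\<dots> = (\<integral>y. Vf y \<partial>C.R s)" by (rule C.R_sd[OF s Vm Vb])
  also have "\<dots> = (\<integral>y. (\<Sum>t. \<gamma>^t * C.pp U t y) \<partial>C.R s)" by (simp add: Vf_def)
  also have "\<dots> = (\<Sum>t. \<gamma>^t * (\<integral>y. C.pp U t y \<partial>C.R s))"
  proof (rule geo_int[OF Rp \<gamma>])
    show "C.pp U t \<in> borel_measurable (C.R s)" for t
      unfolding measurable_cong_sets[OF Rsets refl] by (rule C.pp_meas[OF U])
    show "x \<in> space (C.R s) \<Longrightarrow> 0 \<le> C.pp U t x \<and> C.pp U t x \<le> 1" for t x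
      using C.pp_bnd[OF U] Rspace by blast
  qed
  also have "\<dots> = (\<Sum>t. \<gamma>^t * C.pp U (Suc t) s)" by (simp add: C.pp_Suc[OF U s])
  finally have E: "(\<integral>\<omega>. ?V (fst (\<omega> 1)) \<partial>?mu) = (\<Sum>t. \<gamma>^t * C.pp U (Suc t) s)" .
  define a where "a t = C.pp U (Suc t) s" for t
  have abnd: "0 \<le> a t \<and> a t \<le> 1" for t unfolding a_def by (rule C.pp_bnd[OF U s])
  have sa: "summable (\<lambda>t. \<gamma>^t * a t)" by (rule geo_summable[OF \<gamma> abnd])
  have sp: "summable (\<lambda>t. \<gamma>^t * C.pp U t s)" by (rule geo_summable[OF \<gamma> C.pp_bnd[OF U s]])
  have "?V s = (\<Sum>t. \<gamma>^t * C.pp U t s)" by (rule Veq[OF s, unfolded Vf_def])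
  also have "\<dots> = (\<Sum>t. \<gamma>^(Suc t) * C.pp U (Suc t) s)"
    using suminf_split_head[OF sp] pp0 by simp
  also have "\<dots> = (\<Sum>t. \<gamma> * (\<gamma>^t * a t))" by (simp add: a_def mult.assoc)
  also have "\<dots> = \<gamma> * (\<Sum>t. \<gamma>^t * a t)" by (rule suminf_mult[OF sa])
  finally have Vs: "?V s = \<gamma> * (\<Sum>t. \<gamma>^t * a t)" .
  obtain t0 where t0: "C.pp U t0 s > 0" using S.hit_pos[OF U] reach sIU by blast
  then obtain t1 where t1: "t0 = Suc t1" using pp0 by (cases t0) auto
  have "0 < (\<Sum>t. \<gamma>^t * a t)"
  proof (rule suminf_pos2[OF sa])
    show "0 \<le> \<gamma>^n * a n" for n using abnd[of n] \<gamma> by simp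
    show "0 < \<gamma>^t1 * a t1" using t0 t1 \<gamma> by (simp add: a_def)
  qed
  then have "0 < (1 - \<gamma>) * (\<Sum>t. \<gamma>^t * a t)" using \<gamma> by simp
  also have "\<dots> = (\<integral>\<omega>. ?V (fst (\<omega> 1)) \<partial>?mu) - ?V s"
    unfolding E Vs by (simp add: a_def algebra_simps)
  finally show "(\<integral>\<omega>. ?V (fst (\<omega> 1)) \<partial>?mu) - ?V s > 0" .
qed

end
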